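(* Let $r\ge5$ and let $T$ be a $K_r$-tree composed of copies $H_1,\dots,H_\vartheta$ of $K_r$. Then: (1) every clique in $T$ is contained in some $H_i$; (2) if two distinct vertices $x\ne y$ of $T$ have at least three common neighbors in $T$, then $x$ and $y$ are adjacent in $T$.
   Context: A graph $T$ is a $K_r$-tree (clique tree) of order $\vartheta$ if it is the union of $\vartheta$ copies $H_1,\dots,H_\vartheta$ of $K_r$ such that, for every $1<i\le\vartheta$, $H_i$ shares exactly one edge with $H_1\cup\cdots\cup H_{i-1}$, i.e. the common vertices of $H_i$ and $H_1\cup\cdots\cup H_{i-1}$ are exactly the two endpoints of a single edge of $H_1\cup\cdots\cup H_{i-1}$. *)

theory Defs
  imports Main
begin

text \<open>The copies H 0, ..., H (n-1) of K_r are given as vertex sets; the graph T is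
  their union: two distinct vertices are adjacent iff they lie in a common copy.\<close>

definition ct_adj :: "(nat \<Rightarrow> 'a set) \<Rightarrow> nat \<Rightarrow> 'a \<Rightarrow> 'a \<Rightarrow> bool" where
  "ct_adj H n x y \<longleftrightarrow> x \<noteq> y \<and> (\<exists>i<n. x \<in> H i \<and> y \<in> H i)"

definition ct_verts :: "(nat \<Rightarrow> 'a set) \<Rightarrow> nat \<Rightarrow> 'a set" where
  "ct_verts H n = (\<Union>i<n. H i)"

definition is_Kr_tree :: "nat \<Rightarrow> (nat \<Rightarrow> 'a set) \<Rightarrow> nat \<Rightarrow> bool" where
  "is_Kr_tree r H n \<longleftrightarrow>
     (\<forall>i<n. finite (H i) \<and> card (H i) = r) \<and>
     (\<forall>i. 0 < i \<and> i < n \<longrightarrow>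
        (\<exists>u v. ct_adj H i u v \<and> H i \<inter> ct_verts H i = {u, v}))"

definition ct_clique :: "(nat \<Rightarrow> 'a set) \<Rightarrow> nat \<Rightarrow> 'a set \<Rightarrow> bool" where
  "ct_clique H n C \<longleftrightarrow> C \<subseteq> ct_verts H n \<and> (\<forall>x\<in>C. \<forall>y\<in>C. x \<noteq> y \<longrightarrow> ct_adj H n x y)"

end

theory Submission
  imports Defs
begin

lemma adj_Suc: "ct_adj H (Suc m) x y \<longleftrightarrow> ct_adj H m x y \<or> (x \<noteq> y \<and> x \<in> H m \<and> y \<in> H m)"
  unfolding ct_adj_def by (auto simp: less_Suc_eq)

lemma verts_Suc: "ct_verts H (Suc m) = ct_verts H m \<union> H m"
  unfolding ct_verts_def by (auto simp: lessThan_Suc)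

lemma adj_verts1: "ct_adj H m x y \<Longrightarrow> x \<in> ct_verts H m"
  unfolding ct_adj_def ct_verts_def by auto

lemma adj_verts2: "ct_adj H m x y \<Longrightarrow> y \<in> ct_verts H m"
  unfolding ct_adj_def ct_verts_def by auto

lemma adj_sym: "ct_adj H m x y \<Longrightarrow> ct_adj H m y x"
  unfolding ct_adj_def by auto

lemma edge_data:
  assumes "is_Kr_tree r H n" "0 < m" "m < n"
  obtains u v where "ct_adj H m u v" "H m \<inter> ct_verts H m = {u, v}"
  using assms unfolding is_Kr_tree_def by blast

lemma key_edge:
  assumes "is_Kr_tree r H n" "0 < m" "m < n"
    "x \<in> ct_verts H m" "y \<in> ct_verts H m" "ct_adj H (Suc m) x y"
  shows "ct_adj H m x y"
proof (rule ccontr)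
  assume na: "\<not> ct_adj H m x y"
  obtain u v where uv: "ct_adj H m u v" "H m \<inter> ct_verts H m = {u, v}"
    using edge_data[OF assms(1-3)] by blast
  have "x \<noteq> y" "x \<in> H m" "y \<in> H m" using na assms(6) adj_Suc by metis+
  hence "x \<in> {u,v}" "y \<in> {u,v}" using uv(2) assms(4,5) by auto
  hence "ct_adj H m x y" using \<open>x \<noteq> y\<close> uv(1) adj_sym by auto
  thus False using na by simp
qed

lemma new_case:
  assumes "is_Kr_tree r H n" "0 < m" "m < n"
    "x \<notin> ct_verts H m" "x \<noteq> y" "\<not> ct_adj H (Suc m) x y"
  shows "card {z. ct_adj H (Suc m) x z \<and> ct_adj H (Suc m) y z} \<le> 2"
proof -
  obtain u v where uv: "ct_adj H m u v" "H m \<inter> ct_verts H m = {u, v}"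
    using edge_data[OF assms(1-3)] by blast
  have "{z. ct_adj H (Suc m) x z \<and> ct_adj H (Suc m) y z} \<subseteq> {u, v}"
  proof
    fix z assume "z \<in> {z. ct_adj H (Suc m) x z \<and> ct_adj H (Suc m) y z}"
    hence a: "ct_adj H (Suc m) x z" "ct_adj H (Suc m) y z" by auto
    have "\<not> ct_adj H m x z" using adj_verts1[of H m x z] assms(4) by blast
    hence xz: "x \<in> H m" "z \<in> H m" using a(1) adj_Suc by metis+
    have "y \<notin> H m" using assms(5,6) xz adj_Suc by metis
    hence "ct_adj H m y z" using a(2) adj_Suc by metis
    hence "z \<in> ct_verts H m" by (rule adj_verts2)
    thus "z \<in> {u, v}" using xz uv(2) by blast
  qed
  hence "card {z. ct_adj H (Suc m) x z \<and> ct_adj H (Suc m) y z} \<le> card {u, v}"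
    by (rule card_mono[rotated]) simp
  also have "\<dots> \<le> 2" by (simp add: card_insert_le_m1)
  finally show ?thesis .
qed

definition Pr :: "(nat \<Rightarrow> 'a set) \<Rightarrow> nat \<Rightarrow> bool" where
  "Pr H m \<longleftrightarrow> (\<forall>C. ct_clique H m C \<longrightarrow> (\<exists>i<m. C \<subseteq> H i))
       \<and> (\<forall>x y. x \<noteq> y \<and> card {z. ct_adj H m x z \<and> ct_adj H m y z} \<ge> 3 \<longrightarrow> ct_adj H m x y)"

lemma step_lemma:
  assumes "is_Kr_tree r H n" "0 < m" "m < n" and IH0: "Pr H m"
  shows "Pr H (Suc m)"
proof -
  note m0 = assms(2,3)
  note IH = IH0[unfolded Pr_def]
  show "?thesis" unfolding Pr_def
  proof (intro conjI allI impI)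
    fix C assume cl: "ct_clique H (Suc m) C"
    show "\<exists>i<Suc m. C \<subseteq> H i"
    proof (cases "C \<subseteq> ct_verts H m")
      case True
      have "ct_clique H m C" unfolding ct_clique_def
      proof (intro conjI ballI impI)
        show "C \<subseteq> ct_verts H m" by fact
        fix x y assume "x \<in> C" "y \<in> C" "x \<noteq> y"
        hence "ct_adj H (Suc m) x y" using cl unfolding ct_clique_def by blast
        thus "ct_adj H m x y" using key_edge[OF assms(1) m0, of x y] True \<open>x \<in> C\<close> \<open>y \<in> C\<close> by blast
      qed
      thus ?thesis using conjunct1[OF IH, rule_format, of C] less_Suc_eq by blast
    next
      case False
      then obtain w where w: "w \<in> C" "w \<notin> ct_verts H m" by blast
      have "C \<subseteq> H m"
      proof
        fix c assume c: "c \<in> C"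
        show "c \<in> H m"
        proof (cases "c = w")
          case True
          thus ?thesis using w cl unfolding ct_clique_def verts_Suc by blast
        next
          case False
          have all: "\<forall>x\<in>C. \<forall>y\<in>C. x \<noteq> y \<longrightarrow> ct_adj H (Suc m) x y" using cl unfolding ct_clique_def by simp
          have "w \<noteq> c" using False by simp
          hence "ct_adj H (Suc m) w c" using bspec[OF bspec[OF all w(1)] c] by simp
          moreover have "\<not> ct_adj H m w c" using adj_verts1[of H m w c] w(2) by blast
          ultimately show ?thesis using adj_Suc[of H m w c] by blast
        qed
      qed
      thus ?thesis by blast
    qed
  next
    fix x y assume h: "x \<noteq> y \<and> 3 \<le> card {z. ct_adj H (Suc m) x z \<and> ct_adj H (Suc m) y z}"
    show "ct_adj H (Suc m) x y"
    proof (rule ccontr)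
      assume na: "\<not> ct_adj H (Suc m) x y"
      show False
      proof (cases "x \<in> ct_verts H m \<and> y \<in> ct_verts H m")
        case True
        have eq: "{z. ct_adj H (Suc m) x z \<and> ct_adj H (Suc m) y z} = {z. ct_adj H m x z \<and> ct_adj H m y z}"
        proof (intro set_eqI iffI)
          fix z assume "z \<in> {z. ct_adj H m x z \<and> ct_adj H m y z}"
          thus "z \<in> {z. ct_adj H (Suc m) x z \<and> ct_adj H (Suc m) y z}" using adj_Suc[of H m x z] adj_Suc[of H m y z] by blast
        next
          fix z assume "z \<in> {z. ct_adj H (Suc m) x z \<and> ct_adj H (Suc m) y z}"
          hence a: "ct_adj H (Suc m) x z" "ct_adj H (Suc m) y z" by auto
          have zv: "z \<in> ct_verts H m"
          proof (rule ccontr)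
            assume zn: "z \<notin> ct_verts H m"
            have "\<not> ct_adj H m x z" "\<not> ct_adj H m y z" using adj_verts2[of H m x z] adj_verts2[of H m y z] zn by blast+
            hence "x \<in> H m" "y \<in> H m" using a adj_Suc[of H m x z] adj_Suc[of H m y z] by blast+
            thus False using na h adj_Suc[of H m x y] by blast
          qed
          show "z \<in> {z. ct_adj H m x z \<and> ct_adj H m y z}"
            using key_edge[OF assms(1) m0, of x z] key_edge[OF assms(1) m0, of y z] True zv a by blast
        qed
        have "3 \<le> card {z. ct_adj H m x z \<and> ct_adj H m y z}" using h eq by simp
        hence "ct_adj H m x y" using conjunct2[OF IH, rule_format, of x y] h by blast
        thus False using na adj_Suc[of H m x y] by blast
      next
        case False
        show False
        proof (cases "x \<in> ct_verts H m")
          case True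
          with False have yn: "y \<notin> ct_verts H m" by blast
          have "\<not> ct_adj H (Suc m) y x" using na adj_sym[of H "Suc m" y x] by blast
          have "y \<noteq> x" using h by blast
          from new_case[OF assms(1) m0 yn this] \<open>\<not> ct_adj H (Suc m) y x\<close>
          have "card {z. ct_adj H (Suc m) y z \<and> ct_adj H (Suc m) x z} \<le> 2" by simp
          moreover have "{z. ct_adj H (Suc m) y z \<and> ct_adj H (Suc m) x z} = {z. ct_adj H (Suc m) x z \<and> ct_adj H (Suc m) y z}" by blast
          ultimately show False using h by simp
        next
          case xn: False
          from new_case[OF assms(1) m0 xn _ na] h show False by simp
        qed
      qed
    qed
  qed
qed

lemma base_lemma: "Pr H 1"
proof -
  have adj1: "ct_adj H 1 x y \<longleftrightarrow> x \<noteq> y \<and> x \<in> H 0 \<and> y \<in> H 0" for x y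
    unfolding ct_adj_def by auto
  have v1: "ct_verts H 1 = H 0" unfolding ct_verts_def by auto
  show ?thesis unfolding Pr_def
  proof (intro conjI allI impI)
    fix C assume "ct_clique H 1 C"
    thus "\<exists>i<1. C \<subseteq> H i" unfolding ct_clique_def v1 by auto
  next
    fix x y assume h: "x \<noteq> y \<and> 3 \<le> card {z. ct_adj H 1 x z \<and> ct_adj H 1 y z}"
    hence "{z. ct_adj H 1 x z \<and> ct_adj H 1 y z} \<noteq> {}" by (metis card.empty not_numeral_le_zero)
    thus "ct_adj H 1 x y" using h adj1 by auto
  qed
qed

lemma main:
  assumes "is_Kr_tree r H n" "1 \<le> m" "m \<le> n"
  shows "Pr H m"
  using assms(2,3)
proof (induction m rule: dec_induct)
  case base
  show ?case by (rule base_lemma)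
next
  case (step k)
  thus ?case using step_lemma[OF assms(1), of k] by simp
qed

theorem claim4p12:
  fixes H :: "nat \<Rightarrow> 'a set" and r n :: nat
  assumes "r \<ge> 5" and "n \<ge> 1" and "is_Kr_tree r H n"
  shows "(\<forall>C. ct_clique H n C \<longrightarrow> (\<exists>i<n. C \<subseteq> H i))
       \<and> (\<forall>x y. x \<noteq> y \<and> card {z. ct_adj H n x z \<and> ct_adj H n y z} \<ge> 3 \<longrightarrow> ct_adj H n x y)"
  using main[OF assms(3) assms(2) order_refl] unfolding Pr_def .

end
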